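(* Let $q\in\mathbb{C}\setminus\{0\}$ and $n\ge 1$. Then $G_{n+1}$ is spanned by elements of the form $a\chi b$ with $a,b\in G_n$ and $\chi\in\{1,\,t_n,\,v_{n+1},\,v_{n+1}t_n\}$. Moreover, $G_{n+1}[0]$ is spanned by elements of the form $a\chi b$ with $a,b\in G_n[0]$ and $\chi\in\{1,\,t_n,\,e_n,\,e_nt_n\}$, where $e_n=v_nv_{n+1}$.
   Context: For $q\in\mathbb{C}\setminus\{0\}$ the Hecke–Clifford algebra $G_n$ is the complex algebra generated by $t_1,\dots,t_{n-1}$ and $v_1,\dots,v_n$ subject to: the braid relations $t_jt_{j+1}t_j=t_{j+1}t_jt_{j+1}$, $t_it_j=t_jt_i$ for $|i-j|\ge2$; the quadratic relation $t_j-t_j^{-1}=q-q^{-1}$; the Clifford relations $v_jv_k+v_kv_j=2\delta_{jk}$; and the mixed relations $t_jv_j=v_{j+1}t_j$, $t_jv_{j+1}=v_jt_j-(q-q^{-1})(v_j-v_{j+1})$, $t_jv_l=v_lt_j$ for $l\neq j,j+1$. The map $v_j\mapsto -v_j$, $t_j\mapsto t_j$ defines an automorphism $\alpha$ of order two; $G_n[0]$ denotes its fixed-point subalgebra (the even part). $G_n$ is regarded as a subalgebra of $G_{n+1}$ via the obvious map on generators (and hence $G_n[0]\subset G_{n+1}[0]$). *)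

theory Defs
  imports Complex_Main "HOL-Library.Poly_Mapping"
begin

datatype gen = T nat | V nat

datatype word = Word "gen list"

instantiation word :: monoid_add
begin
definition zero_word_def: "0 = Word []"
fun plus_word :: "word \<Rightarrow> word \<Rightarrow> word" where
  "plus_word (Word a) (Word b) = Word (a @ b)"
instance
proof
  fix a b c :: word
  show "a + b + c = a + (b + c)" by (cases a; cases b; cases c) simp
  show "0 + a = a" by (cases a) (simp add: zero_word_def)
  show "a + 0 = a" by (cases a) (simp add: zero_word_def)
qed
end

text \<open>The free associative unital complex algebra on the generators.\<close>
type_synonym fa = "word \<Rightarrow>\<^sub>0 complex"

definition sc :: "complex \<Rightarrow> fa" where
  "sc c = Poly_Mapping.single (Word []) c"

definition tt :: "nat \<Rightarrow> fa" where
  "tt j = Poly_Mapping.single (Word [T j]) 1"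

definition vv :: "nat \<Rightarrow> fa" where
  "vv j = Poly_Mapping.single (Word [V j]) 1"

definition gens :: "nat \<Rightarrow> gen set" where
  "gens n = {T j | j. 1 \<le> j \<and> j \<le> n - 1 \<and> j < n} \<union> {V j | j. 1 \<le> j \<and> j \<le> n}"

definition FA :: "nat \<Rightarrow> fa set" where
  "FA n = {x. \<forall>w \<in> Poly_Mapping.keys x. \<exists>l. w = Word l \<and> set l \<subseteq> gens n}"

text \<open>Defining relators of G_n (each relation written as  lhs - rhs).
  The quadratic relation t - t^(-1) = q - q^(-1) is written in the equivalent
  polynomial form t^2 = (q - q^(-1)) t + 1.\<close>
definition relators :: "complex \<Rightarrow> nat \<Rightarrow> fa set" where
  "relators q n =
     {tt j * tt (j+1) * tt j - tt (j+1) * tt j * tt (j+1) | j. 1 \<le> j \<and> j + 1 \<le> n - 1}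
   \<union> {tt i * tt j - tt j * tt i | i j. 1 \<le> i \<and> i < n \<and> 1 \<le> j \<and> j < n \<and> (i + 2 \<le> j \<or> j + 2 \<le> i)}
   \<union> {tt j * tt j - sc (q - inverse q) * tt j - 1 | j. 1 \<le> j \<and> j < n}
   \<union> {vv j * vv k + vv k * vv j - sc (if j = k then 2 else 0) | j k. 1 \<le> j \<and> j \<le> n \<and> 1 \<le> k \<and> k \<le> n}
   \<union> {tt j * vv j - vv (j+1) * tt j | j. 1 \<le> j \<and> j < n}
   \<union> {tt j * vv (j+1) - (vv j * tt j - sc (q - inverse q) * (vv j - vv (j+1))) | j. 1 \<le> j \<and> j < n}
   \<union> {tt j * vv l - vv l * tt j | j l. 1 \<le> j \<and> j < n \<and> 1 \<le> l \<and> l \<le> n \<and> l \<noteq> j \<and> l \<noteq> j + 1}"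

inductive_set ideal_gen :: "fa set \<Rightarrow> fa set \<Rightarrow> fa set" for A S where
  base: "s \<in> S \<Longrightarrow> s \<in> ideal_gen A S"
| zero: "0 \<in> ideal_gen A S"
| add: "x \<in> ideal_gen A S \<Longrightarrow> y \<in> ideal_gen A S \<Longrightarrow> x + y \<in> ideal_gen A S"
| mult: "x \<in> ideal_gen A S \<Longrightarrow> a \<in> A \<Longrightarrow> b \<in> A \<Longrightarrow> a * x * b \<in> ideal_gen A S"

text \<open>The defining ideal of G_n inside the free algebra FA n; G_n = FA n / HCideal q n.\<close>
definition HCideal :: "complex \<Rightarrow> nat \<Rightarrow> fa set" where
  "HCideal q n = ideal_gen (FA n) (relators q n)"

inductive_set cspan :: "fa set \<Rightarrow> fa set" for S where
  zero: "0 \<in> cspan S"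
| base: "s \<in> S \<Longrightarrow> s \<in> cspan S"
| add: "x \<in> cspan S \<Longrightarrow> y \<in> cspan S \<Longrightarrow> x + y \<in> cspan S"
| smult: "x \<in> cspan S \<Longrightarrow> sc c * x \<in> cspan S"

text \<open>The automorphism alpha (v_j \<mapsto> -v_j, t_j \<mapsto> t_j) lifted to the free algebra:
  a word with k letters V gets sign (-1)^k.\<close>
fun nV :: "word \<Rightarrow> nat" where
  "nV (Word l) = length (filter (\<lambda>g. case g of V _ \<Rightarrow> True | T _ \<Rightarrow> False) l)"

definition alpha :: "fa \<Rightarrow> fa" where
  "alpha x = Poly_Mapping.mapp (\<lambda>w c. (-1) ^ nV w * c) x"

text \<open>Representatives in FA n of the even part G_n[0]: elements x whose class is alpha-fixed.\<close>
definition Even :: "complex \<Rightarrow> nat \<Rightarrow> fa set" where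
  "Even q n = {x \<in> FA n. alpha x - x \<in> HCideal q n}"

end

theory Submission
  imports Defs
begin

lemma zero_word_Word: "(0::word) = Word []" by (simp add: zero_word_def)

lemma sc_single0: "sc c = Poly_Mapping.single 0 c" by (simp add: sc_def zero_word_def)

lemma sc_1[simp]: "sc 1 = 1" by (simp add: sc_single0)
lemma sc_0[simp]: "sc 0 = 0" by (simp add: sc_single0)
lemma sc_add: "sc (a + b) = sc a + sc b" by (simp add: sc_single0 single_add)
lemma sc_minus: "sc (- a) = - sc a" by (simp add: sc_single0 single_uminus)
lemma sc_diff: "sc (a - b) = sc a - sc b" by (simp add: sc_single0 single_diff)
lemma sc_mult: "sc a * sc b = sc (a * b)" by (simp add: sc_single0 mult_single)
lemma sc_2: "sc 2 = 2" by (simp add: sc_single0)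

lemma update_eq_add: "a \<notin> Poly_Mapping.keys f \<Longrightarrow> Poly_Mapping.update a b f = f + Poly_Mapping.single a b"
  apply (rule poly_mapping_eqI)
  apply (simp add: lookup_add Poly_Mapping.update.rep_eq lookup_single in_keys_iff when_def)
  done

lemma pm_induct:
  fixes x :: "'a::monoid_add \<Rightarrow>\<^sub>0 'b::ring_1"
  assumes "Poly_Mapping.keys x \<subseteq> S" "P 0" "\<And>a b. P a \<Longrightarrow> P b \<Longrightarrow> P (a + b)"
    "\<And>w c. w \<in> S \<Longrightarrow> P (Poly_Mapping.single w c)"
  shows "P x"
proof -
  have "Poly_Mapping.keys x \<subseteq> S \<longrightarrow> P x"
  proof (induction x rule: update_induct)
    case const then show ?case using assms(2) by simp
  next
    case (update f a b)
    have k: "Poly_Mapping.keys (Poly_Mapping.update a b f) = insert a (Poly_Mapping.keys f)"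
      using update.hyps by (simp add: update_eq_add keys_add) (auto simp: in_keys_iff lookup_add lookup_single when_def split: if_splits)
    show ?case using update k assms(3,4) by (auto simp: update_eq_add)
  qed
  then show ?thesis using assms(1) by blast
qed

lemma sc_central: "sc c * x = x * sc c"
proof (induction x rule: pm_induct[where S=UNIV])
  case (4 w d) then show ?case by (simp add: sc_single0 mult_single mult.commute)
qed (auto simp: algebra_simps)



definition Wd :: "nat \<Rightarrow> word set" where "Wd n = {Word l | l. set l \<subseteq> gens n}"

lemma FA_iff: "x \<in> FA n \<longleftrightarrow> Poly_Mapping.keys x \<subseteq> Wd n"
  by (auto simp: FA_def Wd_def)

lemma FA_0[simp]: "0 \<in> FA n" by (simp add: FA_iff)
lemma FA_sc[simp]: "sc c \<in> FA n" by (auto simp: FA_iff sc_def Wd_def)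
lemma FA_1[simp]: "1 \<in> FA n" using FA_sc[of 1 n] by simp
lemma FA_add[simp]: "a \<in> FA n \<Longrightarrow> b \<in> FA n \<Longrightarrow> a + b \<in> FA n"
  using keys_add[of a b] by (auto simp: FA_iff)
lemma FA_uminus[simp]: "a \<in> FA n \<Longrightarrow> - a \<in> FA n"
  by (auto simp: FA_iff)
lemma FA_diff[simp]: "a \<in> FA n \<Longrightarrow> b \<in> FA n \<Longrightarrow> a - b \<in> FA n"
  using keys_diff[of a b] by (auto simp: FA_iff)
lemma FA_mult[simp]: "a \<in> FA n \<Longrightarrow> b \<in> FA n \<Longrightarrow> a * b \<in> FA n"
proof -
  assume a: "a \<in> FA n" and b: "b \<in> FA n"
  have "Poly_Mapping.keys (a * b) \<subseteq> Wd n"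
  proof
    fix k assume "k \<in> Poly_Mapping.keys (a * b)"
    then obtain x y where "k = x + y" "x \<in> Poly_Mapping.keys a" "y \<in> Poly_Mapping.keys b"
      using keys_mult[of a b] by blast
    with a b obtain l1 l2 where "x = Word l1" "set l1 \<subseteq> gens n" "y = Word l2" "set l2 \<subseteq> gens n"
      unfolding FA_iff Wd_def by blast
    with \<open>k = x + y\<close> show "k \<in> Wd n" by (auto simp: Wd_def)
  qed
  then show ?thesis by (simp add: FA_iff)
qed

lemma gens_mono: "n \<le> m \<Longrightarrow> gens n \<subseteq> gens m" by (auto simp: gens_def)
lemma FA_mono: "n \<le> m \<Longrightarrow> FA n \<subseteq> FA m"
  using gens_mono[of n m] by (auto simp: FA_iff Wd_def) blast
lemma FA_Suc: "x \<in> FA n \<Longrightarrow> x \<in> FA (Suc n)" using FA_mono[of n "Suc n"] by auto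

lemma tt_FA[simp]: "1 \<le> j \<Longrightarrow> j < n \<Longrightarrow> tt j \<in> FA n"
  by (auto simp: FA_iff tt_def Wd_def gens_def)
lemma vv_FA[simp]: "1 \<le> j \<Longrightarrow> j \<le> n \<Longrightarrow> vv j \<in> FA n"
  by (auto simp: FA_iff vv_def Wd_def gens_def)

fun gen :: "gen \<Rightarrow> fa" where "gen (T j) = tt j" | "gen (V j) = vv j"

lemma gen_FA: "g \<in> gens n \<Longrightarrow> gen g \<in> FA n"
  by (auto simp: gens_def)

lemma single_cons: "Poly_Mapping.single (Word (g # l)) c = gen g * Poly_Mapping.single (Word l) c"
  by (cases g) (simp_all add: tt_def vv_def mult_single)

lemma FA_induct[consumes 1, case_names zero add sc gen]:
  assumes "x \<in> FA n" "P 0" "\<And>a b. P a \<Longrightarrow> P b \<Longrightarrow> P (a + b)" "\<And>c. P (sc c)"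
    "\<And>g y. g \<in> gens n \<Longrightarrow> y \<in> FA n \<Longrightarrow> P y \<Longrightarrow> P (gen g * y)"
  shows "P x"
proof -
  have w: "set l \<subseteq> gens n \<Longrightarrow> P (Poly_Mapping.single (Word l) c)" for l c
  proof (induction l)
    case Nil then show ?case using assms(4)[of c] by (simp add: sc_def)
  next
    case (Cons g l)
    have "Poly_Mapping.single (Word l) c \<in> FA n" using Cons.prems by (auto simp: FA_iff Wd_def)
    then show ?case using Cons assms(5)[of g] by (simp add: single_cons)
  qed
  show ?thesis
    apply (rule pm_induct[where S="Wd n"])
    using assms(1) apply (simp add: FA_iff)
    using assms(2,3) apply auto[2]
    using w by (auto simp: Wd_def)
qed

lemma nV_add: "nV (a + b) = nV a + nV b" by (cases a; cases b) simp

lemma lookup_alpha: "Poly_Mapping.lookup (alpha x) k = (-1) ^ nV k * Poly_Mapping.lookup x k"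
  by (simp add: alpha_def lookup_mapp when_def in_keys_iff)

lemma alpha_add[simp]: "alpha (a + b) = alpha a + alpha b"
  by (rule poly_mapping_eqI) (simp add: lookup_alpha lookup_add algebra_simps)
lemma alpha_0[simp]: "alpha 0 = 0"
  by (rule poly_mapping_eqI) (simp add: lookup_alpha)
lemma alpha_uminus[simp]: "alpha (- a) = - alpha a"
  by (rule poly_mapping_eqI) (simp add: lookup_alpha)
lemma alpha_diff[simp]: "alpha (a - b) = alpha a - alpha b"
  by (rule poly_mapping_eqI) (simp add: lookup_alpha lookup_minus algebra_simps)
lemma alpha_alpha[simp]: "alpha (alpha a) = a"
  by (rule poly_mapping_eqI) (simp add: lookup_alpha power_mult_distrib[symmetric])
lemma alpha_single: "alpha (Poly_Mapping.single w c) = Poly_Mapping.single w ((-1) ^ nV w * c)"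
  by (rule poly_mapping_eqI) (simp add: lookup_alpha lookup_single when_def)

lemma alpha_mult[simp]: "alpha (a * b) = alpha a * alpha b"
proof (induction a rule: pm_induct[where S=UNIV])
  case (3 a1 a2) then show ?case by (simp add: algebra_simps)
next
  case (4 w c)
  show ?case
  proof (induction b rule: pm_induct[where S=UNIV])
    case (3 b1 b2) then show ?case by (simp add: algebra_simps)
  next
    case (4 w' d) then show ?case
      by (simp add: alpha_single mult_single nV_add power_add algebra_simps)
  qed simp_all
qed simp_all

lemma alpha_sc[simp]: "alpha (sc c) = sc c" by (simp add: sc_def alpha_single)
lemma alpha_1[simp]: "alpha 1 = 1" using alpha_sc[of 1] by simp
lemma alpha_tt[simp]: "alpha (tt j) = tt j" by (simp add: tt_def alpha_single)
lemma alpha_vv[simp]: "alpha (vv j) = - vv j" by (simp add: vv_def alpha_single single_uminus)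

lemma alpha_FA[simp]: "a \<in> FA n \<Longrightarrow> alpha a \<in> FA n"
  using keys_mapp_subset[of "\<lambda>w c. (-1) ^ nV w * c" a] by (auto simp: FA_iff alpha_def)



abbreviation K :: "complex \<Rightarrow> fa" where "K q \<equiv> sc (q - inverse q)"

lemma I_0[simp]: "0 \<in> HCideal q m" by (simp add: HCideal_def ideal_gen.zero)
lemma I_add[simp]: "x \<in> HCideal q m \<Longrightarrow> y \<in> HCideal q m \<Longrightarrow> x + y \<in> HCideal q m"
  by (simp add: HCideal_def ideal_gen.add)
lemma I_mult: "x \<in> HCideal q m \<Longrightarrow> a \<in> FA m \<Longrightarrow> b \<in> FA m \<Longrightarrow> a * x * b \<in> HCideal q m"
  by (simp add: HCideal_def ideal_gen.mult)
lemma I_left: "x \<in> HCideal q m \<Longrightarrow> a \<in> FA m \<Longrightarrow> a * x \<in> HCideal q m"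
  using I_mult[of x q m a 1] by simp
lemma I_right: "x \<in> HCideal q m \<Longrightarrow> b \<in> FA m \<Longrightarrow> x * b \<in> HCideal q m"
  using I_mult[of x q m 1 b] by simp
lemma I_sc: "x \<in> HCideal q m \<Longrightarrow> sc c * x \<in> HCideal q m"
  using I_left by simp
lemma I_neg[simp]: "x \<in> HCideal q m \<Longrightarrow> - x \<in> HCideal q m"
  using I_sc[of x q m "-1"] by (simp add: sc_minus)
lemma I_neg_iff[simp]: "- x \<in> HCideal q m \<longleftrightarrow> x \<in> HCideal q m"
  using I_neg[of "-x"] I_neg[of x] by auto
lemma I_diff[simp]: "x \<in> HCideal q m \<Longrightarrow> y \<in> HCideal q m \<Longrightarrow> x - y \<in> HCideal q m"
  using I_add[of x q m "-y"] by simp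

lemma relators_mono: "relators q n \<subseteq> relators q (Suc n)"
  unfolding relators_def by (rule Un_mono)+ fastforce+

lemma I_mono: "x \<in> HCideal q n \<Longrightarrow> x \<in> HCideal q (Suc n)"
  unfolding HCideal_def
proof (induction rule: ideal_gen.induct)
  case (base s) then show ?case using relators_mono by (blast intro: ideal_gen.base)
next
  case zero then show ?case by (rule ideal_gen.zero)
next
  case (add x y) then show ?case by (simp add: ideal_gen.add)
next
  case (mult x a b) then show ?case using FA_Suc by (blast intro: ideal_gen.mult)
qed

lemma I_rel: "r \<in> relators q m \<Longrightarrow> r \<in> HCideal q m"
  by (simp add: HCideal_def ideal_gen.base)

lemma rTT: "1 \<le> j \<Longrightarrow> j < m \<Longrightarrow> tt j * tt j - K q * tt j - 1 \<in> HCideal q m"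
  by (rule I_rel) (auto simp: relators_def)
lemma rTv: "1 \<le> j \<Longrightarrow> j < m \<Longrightarrow> tt j * vv j - vv (j+1) * tt j \<in> HCideal q m"
  by (rule I_rel) (auto simp: relators_def)
lemma rTw: "1 \<le> j \<Longrightarrow> j < m \<Longrightarrow> tt j * vv (j+1) - (vv j * tt j - K q * (vv j - vv (j+1))) \<in> HCideal q m"
  by (rule I_rel) (auto simp: relators_def)
lemma rvv_anti: "1 \<le> j \<Longrightarrow> j \<le> m \<Longrightarrow> 1 \<le> k \<Longrightarrow> k \<le> m \<Longrightarrow> j \<noteq> k \<Longrightarrow> vv j * vv k + vv k * vv j \<in> HCideal q m"
proof -
  assume "1 \<le> j" "j \<le> m" "1 \<le> k" "k \<le> m" "j \<noteq> k"
  then have "vv j * vv k + vv k * vv j - sc (if j = k then 2 else 0) \<in> HCideal q m"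
    by (intro I_rel) (auto simp: relators_def)
  with \<open>j \<noteq> k\<close> show ?thesis by simp
qed
lemma rvv_sq: "1 \<le> j \<Longrightarrow> j \<le> m \<Longrightarrow> vv j * vv j - 1 \<in> HCideal q m"
proof -
  assume "1 \<le> j" "j \<le> m"
  then have "vv j * vv j + vv j * vv j - sc (if j = j then 2 else 0) \<in> HCideal q m"
    by (intro I_rel) (auto simp: relators_def)
  then have "sc (1/2) * (vv j * vv j + vv j * vv j - sc 2) \<in> HCideal q m" by (simp add: I_sc)
  also have "sc (1/2) * (vv j * vv j + vv j * vv j - sc 2) = (sc (1/2) + sc (1/2)) * (vv j * vv j) - sc (1/2) * sc 2"
    by (simp add: algebra_simps)
  also have "\<dots> = vv j * vv j - 1"
    by (simp only: sc_add[symmetric] sc_mult) simp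
  finally show ?thesis .
qed
lemma rbraid: "1 \<le> j \<Longrightarrow> j + 1 \<le> m - 1 \<Longrightarrow> tt j * tt (j+1) * tt j - tt (j+1) * tt j * tt (j+1) \<in> HCideal q m"
  by (rule I_rel) (auto simp: relators_def)
lemma rTT_comm: "1 \<le> i \<Longrightarrow> i < m \<Longrightarrow> 1 \<le> j \<Longrightarrow> j < m \<Longrightarrow> i + 2 \<le> j \<or> j + 2 \<le> i \<Longrightarrow> tt i * tt j - tt j * tt i \<in> HCideal q m"
  by (rule I_rel) (auto simp: relators_def)
lemma rTv_comm: "1 \<le> j \<Longrightarrow> j < m \<Longrightarrow> 1 \<le> l \<Longrightarrow> l \<le> m \<Longrightarrow> l \<noteq> j \<Longrightarrow> l \<noteq> j + 1 \<Longrightarrow> tt j * vv l - vv l * tt j \<in> HCideal q m"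
  by (rule I_rel) (auto simp: relators_def)

lemma alpha_rel: "r \<in> relators q m \<Longrightarrow> alpha r = r \<or> alpha r = - r"
  unfolding relators_def by (elim UnE CollectE exE conjE; hypsubst; simp add: algebra_simps)

lemma alpha_I: "x \<in> HCideal q m \<Longrightarrow> alpha x \<in> HCideal q m"
proof -
  assume "x \<in> HCideal q m"
  then show ?thesis unfolding HCideal_def
  proof (induction rule: ideal_gen.induct)
    case (base s)
    then have "s \<in> HCideal q m" by (simp add: I_rel)
    then show ?case using alpha_rel[OF base] I_neg[OF \<open>s \<in> HCideal q m\<close>] by (auto simp: HCideal_def)
  next
    case zero then show ?case by (simp add: ideal_gen.zero)
  next
    case (add x y) then show ?case by (simp add: ideal_gen.add)
  next
    case (mult x a b) then show ?case by (simp add: ideal_gen.mult)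
  qed
qed



lemma F1: "a \<in> FA n \<Longrightarrow> vv (n+1) * a - alpha a * vv (n+1) \<in> HCideal q (n+1)"
proof (induction a rule: FA_induct)
  case zero then show ?case by simp
next
  case (add a b)
  have "vv (n+1) * (a + b) - alpha (a + b) * vv (n+1) = (vv (n+1) * a - alpha a * vv (n+1)) + (vv (n+1) * b - alpha b * vv (n+1))"
    by (simp add: algebra_simps)
  then show ?case using add by simp
next
  case (sc c) then show ?case by (simp add: sc_central)
next
  case (gen g y)
  have yF: "y \<in> FA (n+1)" using gen(2) FA_Suc by simp
  show ?case
  proof (cases g)
    case (T j)
    with gen(1) have j: "1 \<le> j" "j < n" by (auto simp: gens_def)
    have e: "vv (n+1) * (gen g * y) - alpha (gen g * y) * vv (n+1)
      = - ((tt j * vv (n+1) - vv (n+1) * tt j) * y) + tt j * (vv (n+1) * y - alpha y * vv (n+1))"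
      using T by (simp add: algebra_simps)
    have "tt j * vv (n+1) - vv (n+1) * tt j \<in> HCideal q (n+1)" using j by (intro rTv_comm) auto
    then show ?thesis unfolding e using gen(3) j yF by (intro I_add I_neg I_right I_left) auto
  next
    case (V j)
    with gen(1) have j: "1 \<le> j" "j \<le> n" by (auto simp: gens_def)
    have e: "vv (n+1) * (gen g * y) - alpha (gen g * y) * vv (n+1)
      = (vv (n+1) * vv j + vv j * vv (n+1)) * y - vv j * (vv (n+1) * y - alpha y * vv (n+1))"
      using V by (simp add: algebra_simps)
    have "vv (n+1) * vv j + vv j * vv (n+1) \<in> HCideal q (n+1)" using j by (intro rvv_anti) auto
    then have 1: "(vv (n+1) * vv j + vv j * vv (n+1)) * y \<in> HCideal q (n+1)" using yF by (rule I_right)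
    have 2: "vv j * (vv (n+1) * y - alpha y * vv (n+1)) \<in> HCideal q (n+1)" using gen(3) j by (intro I_left) auto
    show ?thesis unfolding e using 1 2 by (rule I_diff)
  qed
qed

lemma F3: "b \<in> FA n \<Longrightarrow> b * vv (n+1) - vv (n+1) * alpha b \<in> HCideal q (n+1)"
proof -
  assume "b \<in> FA n"
  then have "vv (n+1) * alpha b - alpha (alpha b) * vv (n+1) \<in> HCideal q (n+1)" by (intro F1) simp
  then have "- (vv (n+1) * alpha b - b * vv (n+1)) \<in> HCideal q (n+1)" by (intro I_neg) simp
  then show ?thesis by (simp only: minus_diff_eq)
qed

lemma F2: "1 \<le> n \<Longrightarrow> a \<in> FA (n-1) \<Longrightarrow> tt n * a - a * tt n \<in> HCideal q (n+1)"
proof -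
  assume n: "1 \<le> n" and a: "a \<in> FA (n-1)"
  from a show ?thesis
  proof (induction a rule: FA_induct)
    case zero then show ?case by simp
  next
    case (add a b)
    have "tt n * (a + b) - (a + b) * tt n = (tt n * a - a * tt n) + (tt n * b - b * tt n)"
      by (simp add: algebra_simps)
    then show ?case using add by simp
  next
    case (sc c) then show ?case by (simp add: sc_central)
  next
    case (gen g y)
    have sub: "FA (n-1) \<subseteq> FA (n+1)" by (rule FA_mono) simp
    have yF: "y \<in> FA (n+1)" using gen(2) sub by auto
    have e: "tt n * (gen g * y) - (gen g * y) * tt n = (tt n * gen g - gen g * tt n) * y + gen g * (tt n * y - y * tt n)"
      by (simp add: algebra_simps)
    have g: "tt n * gen g - gen g * tt n \<in> HCideal q (n+1)"
    proof (cases g)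
      case (T j)
      with gen(1) have j: "1 \<le> j" "j + 1 < n" by (auto simp: gens_def)
      show ?thesis using T j by (simp, intro rTT_comm) auto
    next
      case (V j)
      with gen(1) have j: "1 \<le> j" "j < n" by (auto simp: gens_def)
      show ?thesis using V j by (simp, intro rTv_comm) auto
    qed
    have gF: "gen g \<in> FA (n+1)" using gen_FA[OF gen(1)] sub by auto
    show ?case unfolding e using g gen(3) yF gF by (intro I_add I_right I_left) auto
  qed
qed



definition X :: "nat \<Rightarrow> fa set" where
  "X n = (if n = 0 then {1, vv 1} else {1, tt n, vv (n+1), vv (n+1) * tt n})"

definition Bs :: "nat \<Rightarrow> fa set" where
  "Bs n = {a * \<chi> * b | a \<chi> b. a \<in> FA n \<and> b \<in> FA n \<and> \<chi> \<in> X n}"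

definition good :: "complex \<Rightarrow> nat \<Rightarrow> fa \<Rightarrow> bool" where
  "good q n x = (\<exists>y \<in> cspan (Bs n). x - y \<in> HCideal q (n+1))"

lemma cspan_neg: "x \<in> cspan S \<Longrightarrow> - x \<in> cspan S"
  using cspan.smult[of x S "-1"] by (simp add: sc_minus)
lemma cspan_diff: "x \<in> cspan S \<Longrightarrow> y \<in> cspan S \<Longrightarrow> x - y \<in> cspan S"
  using cspan.add[of x S "-y"] cspan_neg by auto

lemma good_0: "good q n 0" unfolding good_def by (rule bexI[of _ 0]) (auto intro: cspan.zero)
lemma good_add: "good q n x \<Longrightarrow> good q n y \<Longrightarrow> good q n (x + y)"
  unfolding good_def
proof (elim bexE)
  fix a b assume h: "a \<in> cspan (Bs n)" "x - a \<in> HCideal q (n + 1)" "b \<in> cspan (Bs n)" "y - b \<in> HCideal q (n + 1)"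
  have e: "x + y - (a + b) = (x - a) + (y - b)" by (simp add: algebra_simps)
  have "x + y - (a + b) \<in> HCideal q (n + 1)" unfolding e using h by (intro I_add)
  then show "\<exists>y'\<in>cspan (Bs n). x + y - y' \<in> HCideal q (n + 1)"
    using h by (intro bexI[of _ "a + b"]) (simp_all add: cspan.add)
qed
lemma good_sc: "good q n x \<Longrightarrow> good q n (sc c * x)"
  unfolding good_def
proof (elim bexE)
  fix a assume "a \<in> cspan (Bs n)" "x - a \<in> HCideal q (n + 1)"
  then show "\<exists>y'\<in>cspan (Bs n). sc c * x - y' \<in> HCideal q (n + 1)"
    by (intro bexI[of _ "sc c * a"]) (auto intro: cspan.smult simp: right_diff_distrib[symmetric] I_sc)
qed
lemma good_neg: "good q n x \<Longrightarrow> good q n (- x)"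
  using good_sc[of q n x "-1"] by (simp add: sc_minus)
lemma good_diff: "good q n x \<Longrightarrow> good q n y \<Longrightarrow> good q n (x - y)"
  using good_add[of q n x "-y"] good_neg by auto
lemma good_base: "a \<in> FA n \<Longrightarrow> b \<in> FA n \<Longrightarrow> \<chi> \<in> X n \<Longrightarrow> good q n (a * \<chi> * b)"
  unfolding good_def by (rule bexI[of _ "a * \<chi> * b"]) (auto intro!: cspan.base simp: Bs_def)
lemma good_by: "x - y = z \<Longrightarrow> z \<in> HCideal q (n+1) \<Longrightarrow> good q n y \<Longrightarrow> good q n x"
  unfolding good_def
proof (elim bexE)
  fix a assume "x - y = z" "z \<in> HCideal q (n+1)" "a \<in> cspan (Bs n)" "y - a \<in> HCideal q (n + 1)"
  then have "z + (y - a) \<in> HCideal q (n+1)" by simp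
  moreover have "z + (y - a) = x - a" using \<open>x - y = z\<close> by (simp add: algebra_simps)
  ultimately show "\<exists>y'\<in>cspan (Bs n). x - y' \<in> HCideal q (n + 1)" using \<open>a \<in> cspan (Bs n)\<close> by auto
qed

lemma cspan_ctx: "y \<in> cspan (Bs n) \<Longrightarrow> a \<in> FA n \<Longrightarrow> b \<in> FA n \<Longrightarrow> a * y * b \<in> cspan (Bs n)"
proof (induction rule: cspan.induct)
  case zero then show ?case by (simp add: cspan.zero)
next
  case (base s)
  then obtain a' \<chi> b' where "s = a' * \<chi> * b'" "a' \<in> FA n" "b' \<in> FA n" "\<chi> \<in> X n" by (auto simp: Bs_def)
  then have "a * s * b = (a * a') * \<chi> * (b' * b)" "a * a' \<in> FA n" "b' * b \<in> FA n"
    using base by (simp_all add: mult.assoc)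
  then show ?case using \<open>\<chi> \<in> X n\<close> unfolding Bs_def by (intro cspan.base) blast
next
  case (add x y) then show ?case by (simp add: algebra_simps cspan.add)
next
  case (smult x c)
  have "a * (sc c * x) * b = (a * sc c) * x * b" by (simp add: mult.assoc)
  also have "\<dots> = sc c * (a * x * b)" by (simp add: sc_central[of c a, symmetric] mult.assoc)
  finally have "a * (sc c * x) * b = sc c * (a * x * b)" .
  then show ?case using smult by (simp add: cspan.smult)
qed

lemma good_ctx: "good q n x \<Longrightarrow> a \<in> FA n \<Longrightarrow> b \<in> FA n \<Longrightarrow> good q n (a * x * b)"
  unfolding good_def
proof (elim bexE)
  fix y assume y: "y \<in> cspan (Bs n)" "x - y \<in> HCideal q (n+1)" and ab: "a \<in> FA n" "b \<in> FA n"
  then have "a * (x - y) * b \<in> HCideal q (n+1)" using FA_Suc by (intro I_mult) auto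
  then have "a * x * b - a * y * b \<in> HCideal q (n+1)" by (simp add: algebra_simps)
  then show "\<exists>y'\<in>cspan (Bs n). a * x * b - y' \<in> HCideal q (n + 1)" using cspan_ctx[OF y(1) ab] by blast
qed

lemma good_I: "x - x' \<in> HCideal q (n+1) \<Longrightarrow> good q n x' \<Longrightarrow> good q n x"
  using good_by by blast



lemma cen_tt: "tt j * sc c = sc c * tt j" "tt j * (sc c * x) = sc c * (tt j * x)"
  by (simp_all add: sc_central[of c "tt j"] mult.assoc[symmetric])
lemma cen_vv: "vv j * sc c = sc c * vv j" "vv j * (sc c * x) = sc c * (vv j * x)"
  by (simp_all add: sc_central[of c "vv j"] mult.assoc[symmetric])
lemmas cen = cen_tt cen_vv

context fixes q :: complex and n :: nat assumes n1: "1 \<le> n" begin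

lemma fT: "tt n \<in> FA (n+1)" using n1 by simp
lemma fv: "vv n \<in> FA (n+1)" using n1 by simp
lemma fw: "vv (n+1) \<in> FA (n+1)" using n1 by simp
lemma fS: "2 \<le> n \<Longrightarrow> tt (n-1) \<in> FA (n+1)" by simp
lemmas fF = fT fv fw fS FA_mult FA_1 FA_sc

lemma iTT: "(tt n*tt n - K q*tt n - 1) \<in> HCideal q (n+1)" using rTT[of n "n+1" q] n1 by simp
lemma iTv: "(tt n*vv n - vv (n+1)*tt n) \<in> HCideal q (n+1)" using rTv[of n "n+1" q] n1 by simp
lemma iTw: "(tt n*vv (n+1) - (vv n*tt n - K q*(vv n - vv (n+1)))) \<in> HCideal q (n+1)" using rTw[of n "n+1" q] n1 by simp
lemma ivw: "(vv (n+1)*vv n + vv n*vv (n+1)) \<in> HCideal q (n+1)" using rvv_anti[of "n+1" "n+1" n q] n1 by simp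
lemma iww: "(vv (n+1)*vv (n+1) - 1) \<in> HCideal q (n+1)" using rvv_sq[of "n+1" "n+1" q] n1 by simp
lemma iSTS: "2 \<le> n \<Longrightarrow> (tt (n-1)*tt n*tt (n-1) - tt n*tt (n-1)*tt n) \<in> HCideal q (n+1)" using rbraid[of "n-1" "n+1" q] by simp
lemma iSw: "2 \<le> n \<Longrightarrow> (tt (n-1)*vv (n+1) - vv (n+1)*tt (n-1)) \<in> HCideal q (n+1)" using rTv_comm[of "n-1" "n+1" "n+1" q] by simp
lemma iL7: "(vv (n+1)*tt n*vv (n+1) - (K q*(vv n*vv (n+1)*1) + K q*(1*1*1) - vv n*(vv (n+1)*tt n)*1)) \<in> HCideal q (n+1)"
proof -
  have "(vv (n+1)*tt n*vv (n+1) - (K q*(vv n*vv (n+1)*1) + K q*(1*1*1) - vv n*(vv (n+1)*tt n)*1)) = vv (n+1)*(tt n*vv (n+1) - (vv n*tt n - K q*(vv n - vv (n+1)))) + (vv (n+1)*vv n + vv n*vv (n+1))*tt n - K q*(vv (n+1)*vv n + vv n*vv (n+1)) + K q*(vv (n+1)*vv (n+1) - 1)"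
    by (simp add: algebra_simps cen)
  also have "\<dots> \<in> HCideal q (n+1)" using iTw ivw iww fF
    by (blast intro: I_add I_diff I_neg I_sc I_left I_right)
  finally show ?thesis .
qed

lemma c1: "good q n (tt n*1*1)"
proof -
  
  show ?thesis
  proof (rule good_by[where y = "1*tt n*1" and z = "0"])
    show "tt n*1*1 - (1*tt n*1) = 0"
      by (simp add: algebra_simps cen)
    show "0 \<in> HCideal q (n+1)" using iTT iTv iTw ivw iww iL7 fF 
      by (blast intro: I_0 I_add I_diff I_neg I_sc I_left I_right)
    show "good q n (1*tt n*1)" using n1 
      by (intro good_sc good_add good_diff good_neg good_base) (simp_all add: X_def)
  qed
qed

lemma c2: "good q n (tt n*1*tt n)"
proof -
  
  show ?thesis
  proof (rule good_by[where y = "K q*(1*tt n*1) + 1*1*1" and z = "(tt n*tt n - K q*tt n - 1)"])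
    show "tt n*1*tt n - (K q*(1*tt n*1) + 1*1*1) = (tt n*tt n - K q*tt n - 1)"
      by (simp add: algebra_simps cen)
    show "(tt n*tt n - K q*tt n - 1) \<in> HCideal q (n+1)" using iTT iTv iTw ivw iww iL7 fF 
      by (blast intro: I_0 I_add I_diff I_neg I_sc I_left I_right)
    show "good q n (K q*(1*tt n*1) + 1*1*1)" using n1 
      by (intro good_sc good_add good_diff good_neg good_base) (simp_all add: X_def)
  qed
qed

lemma c3: "good q n (tt n*1*vv (n+1))"
proof -
  
  show ?thesis
  proof (rule good_by[where y = "vv n*tt n*1 - K q*(vv n*1*1 - 1*vv (n+1)*1)" and z = "(tt n*vv (n+1) - (vv n*tt n - K q*(vv n - vv (n+1))))"])
    show "tt n*1*vv (n+1) - (vv n*tt n*1 - K q*(vv n*1*1 - 1*vv (n+1)*1)) = (tt n*vv (n+1) - (vv n*tt n - K q*(vv n - vv (n+1))))"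
      by (simp add: algebra_simps cen)
    show "(tt n*vv (n+1) - (vv n*tt n - K q*(vv n - vv (n+1)))) \<in> HCideal q (n+1)" using iTT iTv iTw ivw iww iL7 fF 
      by (blast intro: I_0 I_add I_diff I_neg I_sc I_left I_right)
    show "good q n (vv n*tt n*1 - K q*(vv n*1*1 - 1*vv (n+1)*1))" using n1 
      by (intro good_sc good_add good_diff good_neg good_base) (simp_all add: X_def)
  qed
qed

lemma c4: "good q n (tt n*1*(vv (n+1)*tt n))"
proof -
  
  show ?thesis
  proof (rule good_by[where y = "vv n*1*1 + K q*(1*(vv (n+1)*tt n)*1)" and z = "(tt n*vv (n+1) - (vv n*tt n - K q*(vv n - vv (n+1))))*tt n + vv n*(tt n*tt n - K q*tt n - 1)"])
    show "tt n*1*(vv (n+1)*tt n) - (vv n*1*1 + K q*(1*(vv (n+1)*tt n)*1)) = (tt n*vv (n+1) - (vv n*tt n - K q*(vv n - vv (n+1))))*tt n + vv n*(tt n*tt n - K q*tt n - 1)"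
      by (simp add: algebra_simps cen)
    show "(tt n*vv (n+1) - (vv n*tt n - K q*(vv n - vv (n+1))))*tt n + vv n*(tt n*tt n - K q*tt n - 1) \<in> HCideal q (n+1)" using iTT iTv iTw ivw iww iL7 fF 
      by (blast intro: I_0 I_add I_diff I_neg I_sc I_left I_right)
    show "good q n (vv n*1*1 + K q*(1*(vv (n+1)*tt n)*1))" using n1 
      by (intro good_sc good_add good_diff good_neg good_base) (simp_all add: X_def)
  qed
qed

lemma c5: "good q n (tt n*vv n*1)"
proof -
  
  show ?thesis
  proof (rule good_by[where y = "1*(vv (n+1)*tt n)*1" and z = "(tt n*vv n - vv (n+1)*tt n)"])
    show "tt n*vv n*1 - (1*(vv (n+1)*tt n)*1) = (tt n*vv n - vv (n+1)*tt n)"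
      by (simp add: algebra_simps cen)
    show "(tt n*vv n - vv (n+1)*tt n) \<in> HCideal q (n+1)" using iTT iTv iTw ivw iww iL7 fF 
      by (blast intro: I_0 I_add I_diff I_neg I_sc I_left I_right)
    show "good q n (1*(vv (n+1)*tt n)*1)" using n1 
      by (intro good_sc good_add good_diff good_neg good_base) (simp_all add: X_def)
  qed
qed

lemma c6: "good q n (tt n*vv n*tt n)"
proof -
  
  show ?thesis
  proof (rule good_by[where y = "K q*(1*(vv (n+1)*tt n)*1) + 1*vv (n+1)*1" and z = "(tt n*vv n - vv (n+1)*tt n)*tt n + vv (n+1)*(tt n*tt n - K q*tt n - 1)"])
    show "tt n*vv n*tt n - (K q*(1*(vv (n+1)*tt n)*1) + 1*vv (n+1)*1) = (tt n*vv n - vv (n+1)*tt n)*tt n + vv (n+1)*(tt n*tt n - K q*tt n - 1)"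
      by (simp add: algebra_simps cen)
    show "(tt n*vv n - vv (n+1)*tt n)*tt n + vv (n+1)*(tt n*tt n - K q*tt n - 1) \<in> HCideal q (n+1)" using iTT iTv iTw ivw iww iL7 fF 
      by (blast intro: I_0 I_add I_diff I_neg I_sc I_left I_right)
    show "good q n (K q*(1*(vv (n+1)*tt n)*1) + 1*vv (n+1)*1)" using n1 
      by (intro good_sc good_add good_diff good_neg good_base) (simp_all add: X_def)
  qed
qed

lemma c7: "good q n (tt n*vv n*vv (n+1))"
proof -
  
  show ?thesis
  proof (rule good_by[where y = "K q*(vv n*vv (n+1)*1) + K q*(1*1*1) - vv n*(vv (n+1)*tt n)*1" and z = "(tt n*vv n - vv (n+1)*tt n)*vv (n+1) + (vv (n+1)*tt n*vv (n+1) - (K q*(vv n*vv (n+1)*1) + K q*(1*1*1) - vv n*(vv (n+1)*tt n)*1))"])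
    show "tt n*vv n*vv (n+1) - (K q*(vv n*vv (n+1)*1) + K q*(1*1*1) - vv n*(vv (n+1)*tt n)*1) = (tt n*vv n - vv (n+1)*tt n)*vv (n+1) + (vv (n+1)*tt n*vv (n+1) - (K q*(vv n*vv (n+1)*1) + K q*(1*1*1) - vv n*(vv (n+1)*tt n)*1))"
      by (simp add: algebra_simps cen)
    show "(tt n*vv n - vv (n+1)*tt n)*vv (n+1) + (vv (n+1)*tt n*vv (n+1) - (K q*(vv n*vv (n+1)*1) + K q*(1*1*1) - vv n*(vv (n+1)*tt n)*1)) \<in> HCideal q (n+1)" using iTT iTv iTw ivw iww iL7 fF 
      by (blast intro: I_0 I_add I_diff I_neg I_sc I_left I_right)
    show "good q n (K q*(vv n*vv (n+1)*1) + K q*(1*1*1) - vv n*(vv (n+1)*tt n)*1)" using n1 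
      by (intro good_sc good_add good_diff good_neg good_base) (simp_all add: X_def)
  qed
qed

lemma c8: "good q n (tt n*vv n*(vv (n+1)*tt n))"
proof -
  
  show ?thesis
  proof (rule good_by[where y = "K q*(1*tt n*1) - vv n*vv (n+1)*1" and z = "((tt n*vv n - vv (n+1)*tt n)*vv (n+1) + (vv (n+1)*tt n*vv (n+1) - (K q*(vv n*vv (n+1)*1) + K q*(1*1*1) - vv n*(vv (n+1)*tt n)*1)))*tt n - vv n*vv (n+1)*(tt n*tt n - K q*tt n - 1)"])
    show "tt n*vv n*(vv (n+1)*tt n) - (K q*(1*tt n*1) - vv n*vv (n+1)*1) = ((tt n*vv n - vv (n+1)*tt n)*vv (n+1) + (vv (n+1)*tt n*vv (n+1) - (K q*(vv n*vv (n+1)*1) + K q*(1*1*1) - vv n*(vv (n+1)*tt n)*1)))*tt n - vv n*vv (n+1)*(tt n*tt n - K q*tt n - 1)"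
      by (simp add: algebra_simps cen)
    show "((tt n*vv n - vv (n+1)*tt n)*vv (n+1) + (vv (n+1)*tt n*vv (n+1) - (K q*(vv n*vv (n+1)*1) + K q*(1*1*1) - vv n*(vv (n+1)*tt n)*1)))*tt n - vv n*vv (n+1)*(tt n*tt n - K q*tt n - 1) \<in> HCideal q (n+1)" using iTT iTv iTw ivw iww iL7 fF 
      by (blast intro: I_0 I_add I_diff I_neg I_sc I_left I_right)
    show "good q n (K q*(1*tt n*1) - vv n*vv (n+1)*1)" using n1 
      by (intro good_sc good_add good_diff good_neg good_base) (simp_all add: X_def)
  qed
qed

lemma c9: "2 \<le> n \<Longrightarrow> good q n (tt n*tt (n-1)*1)"
proof -
  assume n2: "2 \<le> n"
  show ?thesis
  proof (rule good_by[where y = "1*tt n*tt (n-1)" and z = "0"])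
    show "tt n*tt (n-1)*1 - (1*tt n*tt (n-1)) = 0"
      by (simp add: algebra_simps cen)
    show "0 \<in> HCideal q (n+1)" using iTT iTv iTw ivw iww iL7 fF iSTS[OF n2] iSw[OF n2] n2
      by (blast intro: I_0 I_add I_diff I_neg I_sc I_left I_right)
    show "good q n (1*tt n*tt (n-1))" using n1 n2
      by (intro good_sc good_add good_diff good_neg good_base) (simp_all add: X_def)
  qed
qed

lemma c10: "2 \<le> n \<Longrightarrow> good q n (tt n*tt (n-1)*tt n)"
proof -
  assume n2: "2 \<le> n"
  show ?thesis
  proof (rule good_by[where y = "tt (n-1)*tt n*tt (n-1)" and z = "- (tt (n-1)*tt n*tt (n-1) - tt n*tt (n-1)*tt n)"])
    show "tt n*tt (n-1)*tt n - (tt (n-1)*tt n*tt (n-1)) = - (tt (n-1)*tt n*tt (n-1) - tt n*tt (n-1)*tt n)"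
      by (simp add: algebra_simps cen)
    show "- (tt (n-1)*tt n*tt (n-1) - tt n*tt (n-1)*tt n) \<in> HCideal q (n+1)" using iTT iTv iTw ivw iww iL7 fF iSTS[OF n2] iSw[OF n2] n2
      by (blast intro: I_0 I_add I_diff I_neg I_sc I_left I_right)
    show "good q n (tt (n-1)*tt n*tt (n-1))" using n1 n2
      by (intro good_sc good_add good_diff good_neg good_base) (simp_all add: X_def)
  qed
qed

lemma c11: "2 \<le> n \<Longrightarrow> good q n (tt n*tt (n-1)*vv (n+1))"
proof -
  assume n2: "2 \<le> n"
  show ?thesis
  proof (rule good_by[where y = "vv n*tt n*tt (n-1) - K q*(vv n*1*tt (n-1)) + K q*(1*vv (n+1)*tt (n-1))" and z = "tt n*(tt (n-1)*vv (n+1) - vv (n+1)*tt (n-1)) + (tt n*vv (n+1) - (vv n*tt n - K q*(vv n - vv (n+1))))*tt (n-1)"])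
    show "tt n*tt (n-1)*vv (n+1) - (vv n*tt n*tt (n-1) - K q*(vv n*1*tt (n-1)) + K q*(1*vv (n+1)*tt (n-1))) = tt n*(tt (n-1)*vv (n+1) - vv (n+1)*tt (n-1)) + (tt n*vv (n+1) - (vv n*tt n - K q*(vv n - vv (n+1))))*tt (n-1)"
      by (simp add: algebra_simps cen)
    show "tt n*(tt (n-1)*vv (n+1) - vv (n+1)*tt (n-1)) + (tt n*vv (n+1) - (vv n*tt n - K q*(vv n - vv (n+1))))*tt (n-1) \<in> HCideal q (n+1)" using iTT iTv iTw ivw iww iL7 fF iSTS[OF n2] iSw[OF n2] n2
      by (blast intro: I_0 I_add I_diff I_neg I_sc I_left I_right)
    show "good q n (vv n*tt n*tt (n-1) - K q*(vv n*1*tt (n-1)) + K q*(1*vv (n+1)*tt (n-1)))" using n1 n2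
      by (intro good_sc good_add good_diff good_neg good_base) (simp_all add: X_def)
  qed
qed

lemma c12: "2 \<le> n \<Longrightarrow> good q n (tt n*tt (n-1)*(vv (n+1)*tt n))"
proof -
  assume n2: "2 \<le> n"
  show ?thesis
  proof (rule good_by[where y = "(vv n*tt (n-1))*tt n*tt (n-1) - K q*((vv n*tt (n-1))*tt n*1) + K q*(tt (n-1)*(vv (n+1)*tt n)*1)" and z = "(tt n*(tt (n-1)*vv (n+1) - vv (n+1)*tt (n-1)) + (tt n*vv (n+1) - (vv n*tt n - K q*(vv n - vv (n+1))))*tt (n-1))*tt n - vv n*(tt (n-1)*tt n*tt (n-1) - tt n*tt (n-1)*tt n) - K q*(tt (n-1)*vv (n+1) - vv (n+1)*tt (n-1))*tt n"])
    show "tt n*tt (n-1)*(vv (n+1)*tt n) - ((vv n*tt (n-1))*tt n*tt (n-1) - K q*((vv n*tt (n-1))*tt n*1) + K q*(tt (n-1)*(vv (n+1)*tt n)*1)) = (tt n*(tt (n-1)*vv (n+1) - vv (n+1)*tt (n-1)) + (tt n*vv (n+1) - (vv n*tt n - K q*(vv n - vv (n+1))))*tt (n-1))*tt n - vv n*(tt (n-1)*tt n*tt (n-1) - tt n*tt (n-1)*tt n) - K q*(tt (n-1)*vv (n+1) - vv (n+1)*tt (n-1))*tt n"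
      by (simp add: algebra_simps cen)
    show "(tt n*(tt (n-1)*vv (n+1) - vv (n+1)*tt (n-1)) + (tt n*vv (n+1) - (vv n*tt n - K q*(vv n - vv (n+1))))*tt (n-1))*tt n - vv n*(tt (n-1)*tt n*tt (n-1) - tt n*tt (n-1)*tt n) - K q*(tt (n-1)*vv (n+1) - vv (n+1)*tt (n-1))*tt n \<in> HCideal q (n+1)" using iTT iTv iTw ivw iww iL7 fF iSTS[OF n2] iSw[OF n2] n2
      by (blast intro: I_0 I_add I_diff I_neg I_sc I_left I_right)
    show "good q n ((vv n*tt (n-1))*tt n*tt (n-1) - K q*((vv n*tt (n-1))*tt n*1) + K q*(tt (n-1)*(vv (n+1)*tt n)*1))" using n1 n2
      by (intro good_sc good_add good_diff good_neg good_base) (simp_all add: X_def)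
  qed
qed

lemma c13: "2 \<le> n \<Longrightarrow> good q n (tt n*(vv n*tt (n-1))*1)"
proof -
  assume n2: "2 \<le> n"
  show ?thesis
  proof (rule good_by[where y = "1*(vv (n+1)*tt n)*tt (n-1)" and z = "(tt n*vv n - vv (n+1)*tt n)*tt (n-1)"])
    show "tt n*(vv n*tt (n-1))*1 - (1*(vv (n+1)*tt n)*tt (n-1)) = (tt n*vv n - vv (n+1)*tt n)*tt (n-1)"
      by (simp add: algebra_simps cen)
    show "(tt n*vv n - vv (n+1)*tt n)*tt (n-1) \<in> HCideal q (n+1)" using iTT iTv iTw ivw iww iL7 fF iSTS[OF n2] iSw[OF n2] n2
      by (blast intro: I_0 I_add I_diff I_neg I_sc I_left I_right)
    show "good q n (1*(vv (n+1)*tt n)*tt (n-1))" using n1 n2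
      by (intro good_sc good_add good_diff good_neg good_base) (simp_all add: X_def)
  qed
qed

lemma c14: "2 \<le> n \<Longrightarrow> good q n (tt n*(vv n*tt (n-1))*tt n)"
proof -
  assume n2: "2 \<le> n"
  show ?thesis
  proof (rule good_by[where y = "tt (n-1)*(vv (n+1)*tt n)*tt (n-1)" and z = "(tt n*vv n - vv (n+1)*tt n)*tt (n-1)*tt n - vv (n+1)*(tt (n-1)*tt n*tt (n-1) - tt n*tt (n-1)*tt n) - (tt (n-1)*vv (n+1) - vv (n+1)*tt (n-1))*tt n*tt (n-1)"])
    show "tt n*(vv n*tt (n-1))*tt n - (tt (n-1)*(vv (n+1)*tt n)*tt (n-1)) = (tt n*vv n - vv (n+1)*tt n)*tt (n-1)*tt n - vv (n+1)*(tt (n-1)*tt n*tt (n-1) - tt n*tt (n-1)*tt n) - (tt (n-1)*vv (n+1) - vv (n+1)*tt (n-1))*tt n*tt (n-1)"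
      by (simp add: algebra_simps cen)
    show "(tt n*vv n - vv (n+1)*tt n)*tt (n-1)*tt n - vv (n+1)*(tt (n-1)*tt n*tt (n-1) - tt n*tt (n-1)*tt n) - (tt (n-1)*vv (n+1) - vv (n+1)*tt (n-1))*tt n*tt (n-1) \<in> HCideal q (n+1)" using iTT iTv iTw ivw iww iL7 fF iSTS[OF n2] iSw[OF n2] n2
      by (blast intro: I_0 I_add I_diff I_neg I_sc I_left I_right)
    show "good q n (tt (n-1)*(vv (n+1)*tt n)*tt (n-1))" using n1 n2
      by (intro good_sc good_add good_diff good_neg good_base) (simp_all add: X_def)
  qed
qed

lemma c15: "2 \<le> n \<Longrightarrow> good q n (tt n*(vv n*tt (n-1))*vv (n+1))"
proof -
  assume n2: "2 \<le> n"
  show ?thesis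
  proof (rule good_by[where y = "K q*(vv n*vv (n+1)*tt (n-1)) + K q*(1*1*tt (n-1)) - vv n*(vv (n+1)*tt n)*tt (n-1)" and z = "(tt n*vv n - vv (n+1)*tt n)*tt (n-1)*vv (n+1) + vv (n+1)*tt n*(tt (n-1)*vv (n+1) - vv (n+1)*tt (n-1)) + (vv (n+1)*tt n*vv (n+1) - (K q*(vv n*vv (n+1)*1) + K q*(1*1*1) - vv n*(vv (n+1)*tt n)*1))*tt (n-1)"])
    show "tt n*(vv n*tt (n-1))*vv (n+1) - (K q*(vv n*vv (n+1)*tt (n-1)) + K q*(1*1*tt (n-1)) - vv n*(vv (n+1)*tt n)*tt (n-1)) = (tt n*vv n - vv (n+1)*tt n)*tt (n-1)*vv (n+1) + vv (n+1)*tt n*(tt (n-1)*vv (n+1) - vv (n+1)*tt (n-1)) + (vv (n+1)*tt n*vv (n+1) - (K q*(vv n*vv (n+1)*1) + K q*(1*1*1) - vv n*(vv (n+1)*tt n)*1))*tt (n-1)"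
      by (simp add: algebra_simps cen)
    show "(tt n*vv n - vv (n+1)*tt n)*tt (n-1)*vv (n+1) + vv (n+1)*tt n*(tt (n-1)*vv (n+1) - vv (n+1)*tt (n-1)) + (vv (n+1)*tt n*vv (n+1) - (K q*(vv n*vv (n+1)*1) + K q*(1*1*1) - vv n*(vv (n+1)*tt n)*1))*tt (n-1) \<in> HCideal q (n+1)" using iTT iTv iTw ivw iww iL7 fF iSTS[OF n2] iSw[OF n2] n2
      by (blast intro: I_0 I_add I_diff I_neg I_sc I_left I_right)
    show "good q n (K q*(vv n*vv (n+1)*tt (n-1)) + K q*(1*1*tt (n-1)) - vv n*(vv (n+1)*tt n)*tt (n-1))" using n1 n2
      by (intro good_sc good_add good_diff good_neg good_base) (simp_all add: X_def)
  qed
qed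

lemma c16: "2 \<le> n \<Longrightarrow> good q n (tt n*(vv n*tt (n-1))*(vv (n+1)*tt n))"
proof -
  assume n2: "2 \<le> n"
  show ?thesis
  proof (rule good_by[where y = "- ((vv n*tt (n-1))*(vv (n+1)*tt n)*tt (n-1)) + K q*((vv n*tt (n-1))*(vv (n+1)*tt n)*1) + K q*(tt (n-1)*tt n*1)" and z = "((tt n*vv n - vv (n+1)*tt n)*tt (n-1)*vv (n+1) + vv (n+1)*tt n*(tt (n-1)*vv (n+1) - vv (n+1)*tt (n-1)) + (vv (n+1)*tt n*vv (n+1) - (K q*(vv n*vv (n+1)*1) + K q*(1*1*1) - vv n*(vv (n+1)*tt n)*1))*tt (n-1))*tt n + vv n*(tt (n-1)*vv (n+1) - vv (n+1)*tt (n-1))*tt n*tt (n-1) + vv n*vv (n+1)*(tt (n-1)*tt n*tt (n-1) - tt n*tt (n-1)*tt n) - K q*vv n*(tt (n-1)*vv (n+1) - vv (n+1)*tt (n-1))*tt n"])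
    show "tt n*(vv n*tt (n-1))*(vv (n+1)*tt n) - (- ((vv n*tt (n-1))*(vv (n+1)*tt n)*tt (n-1)) + K q*((vv n*tt (n-1))*(vv (n+1)*tt n)*1) + K q*(tt (n-1)*tt n*1)) = ((tt n*vv n - vv (n+1)*tt n)*tt (n-1)*vv (n+1) + vv (n+1)*tt n*(tt (n-1)*vv (n+1) - vv (n+1)*tt (n-1)) + (vv (n+1)*tt n*vv (n+1) - (K q*(vv n*vv (n+1)*1) + K q*(1*1*1) - vv n*(vv (n+1)*tt n)*1))*tt (n-1))*tt n + vv n*(tt (n-1)*vv (n+1) - vv (n+1)*tt (n-1))*tt n*tt (n-1) + vv n*vv (n+1)*(tt (n-1)*tt n*tt (n-1) - tt n*tt (n-1)*tt n) - K q*vv n*(tt (n-1)*vv (n+1) - vv (n+1)*tt (n-1))*tt n"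
      by (simp add: algebra_simps cen)
    show "((tt n*vv n - vv (n+1)*tt n)*tt (n-1)*vv (n+1) + vv (n+1)*tt n*(tt (n-1)*vv (n+1) - vv (n+1)*tt (n-1)) + (vv (n+1)*tt n*vv (n+1) - (K q*(vv n*vv (n+1)*1) + K q*(1*1*1) - vv n*(vv (n+1)*tt n)*1))*tt (n-1))*tt n + vv n*(tt (n-1)*vv (n+1) - vv (n+1)*tt (n-1))*tt n*tt (n-1) + vv n*vv (n+1)*(tt (n-1)*tt n*tt (n-1) - tt n*tt (n-1)*tt n) - K q*vv n*(tt (n-1)*vv (n+1) - vv (n+1)*tt (n-1))*tt n \<in> HCideal q (n+1)" using iTT iTv iTw ivw iww iL7 fF iSTS[OF n2] iSw[OF n2] n2
      by (blast intro: I_0 I_add I_diff I_neg I_sc I_left I_right)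
    show "good q n (- ((vv n*tt (n-1))*(vv (n+1)*tt n)*tt (n-1)) + K q*((vv n*tt (n-1))*(vv (n+1)*tt n)*1) + K q*(tt (n-1)*tt n*1))" using n1 n2
      by (intro good_sc good_add good_diff good_neg good_base) (simp_all add: X_def)
  qed
qed

end



lemma X_FA: "\<chi> \<in> X n \<Longrightarrow> \<chi> \<in> FA (n+1)"
  by (cases "n = 0") (auto simp: X_def)

lemma core: "1 \<le> n \<Longrightarrow> \<chi>' \<in> X (n-1) \<Longrightarrow> \<chi> \<in> X n \<Longrightarrow> good q n (tt n * \<chi>' * \<chi>)"
proof -
  assume n: "1 \<le> n" and c': "\<chi>' \<in> X (n-1)" and c: "\<chi> \<in> X n"
  have Xn: "X n = {1, tt n, vv (n+1), vv (n+1) * tt n}" using n by (simp add: X_def)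
  have X': "\<chi>' = 1 \<or> \<chi>' = vv n \<or> (2 \<le> n \<and> (\<chi>' = tt (n-1) \<or> \<chi>' = vv n * tt (n-1)))"
    using c' n by (cases "n = 1") (auto simp: X_def)
  show ?thesis
    using X' c unfolding Xn
    using c1[OF n] c2[OF n] c3[OF n] c4[OF n] c5[OF n] c6[OF n] c7[OF n] c8[OF n]
      c9[OF n] c10[OF n] c11[OF n] c12[OF n] c13[OF n] c14[OF n] c15[OF n] c16[OF n]
    by (elim disjE conjE insertE; simp)
qed

lemma vchi: "\<chi> \<in> X n \<Longrightarrow> good q n (vv (n+1) * \<chi>)"
proof -
  assume c: "\<chi> \<in> X n"
  have w1: "vv (n+1) * vv (n+1) - 1 \<in> HCideal q (n+1)" by (rule rvv_sq) auto
  have b1: "good q n (1 * vv (n+1) * 1)" by (rule good_base) (auto simp: X_def)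
  have b2: "good q n (1 * 1 * 1)" by (rule good_base) (auto simp: X_def)
  show ?thesis
  proof (cases "n = 0")
    case True
    then have "\<chi> = 1 \<or> \<chi> = vv (n+1)" using c by (auto simp: X_def)
    then show ?thesis
    proof
      assume "\<chi> = 1" then show ?thesis using b1 by simp
    next
      assume "\<chi> = vv (n+1)" then show ?thesis using good_by[OF _ w1 b2] by simp
    qed
  next
    case False
    then have "\<chi> = 1 \<or> \<chi> = tt n \<or> \<chi> = vv (n+1) \<or> \<chi> = vv (n+1) * tt n" using c by (auto simp: X_def)
    moreover have "good q n (1 * (vv (n+1) * tt n) * 1)" using False by (intro good_base) (auto simp: X_def)
    moreover have "good q n (1 * tt n * 1)" using False by (intro good_base) (auto simp: X_def)
    moreover have "(vv (n+1) * vv (n+1) - 1) * tt n \<in> HCideal q (n+1)" using w1 False by (intro I_right) auto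
    ultimately show ?thesis using b1 good_by[OF _ w1 b2]
      good_by[of "vv (n+1) * (vv (n+1) * tt n)" "1 * tt n * 1" "(vv (n+1) * vv (n+1) - 1) * tt n" q n]
      by (auto simp: algebra_simps)
  qed
qed

lemma F4: "1 \<le> n \<Longrightarrow> b \<in> FA (n-1) \<Longrightarrow> \<chi> \<in> X n \<Longrightarrow> \<exists>b' \<in> FA n. b * \<chi> - \<chi> * b' \<in> HCideal q (n+1)"
proof -
  assume n: "1 \<le> n" and b: "b \<in> FA (n-1)" and c: "\<chi> \<in> X n"
  have bn: "b \<in> FA n" using b FA_mono[of "n-1" n] by auto
  have f2: "tt n * b - b * tt n \<in> HCideal q (n+1)" using F2[OF n b] .
  have f2a: "tt n * alpha b - alpha b * tt n \<in> HCideal q (n+1)" using F2[OF n alpha_FA[OF b]] .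
  have f3: "b * vv (n+1) - vv (n+1) * alpha b \<in> HCideal q (n+1)" using F3[OF bn] .
  have "\<chi> = 1 \<or> \<chi> = tt n \<or> \<chi> = vv (n+1) \<or> \<chi> = vv (n+1) * tt n" using c n by (auto simp: X_def)
  then show ?thesis
  proof (elim disjE)
    assume "\<chi> = 1" then show ?thesis using bn by (intro bexI[of _ b]) auto
  next
    assume "\<chi> = tt n" then show ?thesis using bn f2 I_neg[OF f2] by (intro bexI[of _ b]) (auto simp: algebra_simps)
  next
    assume "\<chi> = vv (n+1)" then show ?thesis using bn f3 by (intro bexI[of _ "alpha b"]) auto
  next
    assume ch: "\<chi> = vv (n+1) * tt n"
    have e: "b * \<chi> - \<chi> * alpha b = (b * vv (n+1) - vv (n+1) * alpha b) * tt n - vv (n+1) * (tt n * alpha b - alpha b * tt n)"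
      unfolding ch by (simp add: algebra_simps)
    have "b * \<chi> - \<chi> * alpha b \<in> HCideal q (n+1)" unfolding e
      using f3 f2a n by (intro I_diff I_right[OF f3] I_left[OF f2a]) auto
    then show ?thesis using bn by (intro bexI[of _ "alpha b"]) auto
  qed
qed



lemma cspan_induct_good[consumes 1, case_names zero base add smult]:
  assumes "z \<in> cspan S" "P 0" "\<And>s. s \<in> S \<Longrightarrow> P s" "\<And>x y. P x \<Longrightarrow> P y \<Longrightarrow> P (x + y)"
    "\<And>x c. P x \<Longrightarrow> P (sc c * x)"
  shows "P z"
  using assms(1) by (induction rule: cspan.induct) (auto intro: assms)

lemma sc_pull: "a * (sc c * x) = sc c * (a * x)"
  by (simp add: mult.assoc[symmetric] sc_central[of c a])

lemma Tcase:
  assumes n: "1 \<le> n" and IH: "\<forall>x\<in>FA n. good q (n-1) x"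
    and a: "a \<in> FA n" and b: "b \<in> FA n" and c: "\<chi> \<in> X n"
  shows "good q n (tt n * (a * \<chi> * b))"
proof -
  have cF: "\<chi> \<in> FA (n+1)" using X_FA[OF c] .
  have bF: "b \<in> FA (n+1)" using b FA_Suc by simp
  have nn: "n - 1 + 1 = n" using n by simp
  obtain z where z: "z \<in> cspan (Bs (n-1))" "a - z \<in> HCideal q n"
    using IH a unfolding good_def nn by auto
  have z1: "a - z \<in> HCideal q (n+1)" using I_mono[OF z(2)] by simp
  have "tt n * (a - z) * (\<chi> * b) \<in> HCideal q (n+1)" using z1 cF bF n by (intro I_mult) auto
  then have d: "tt n * (a * \<chi> * b) - tt n * (z * \<chi> * b) \<in> HCideal q (n+1)" by (simp add: algebra_simps)
  have "good q n (tt n * (z * \<chi> * b))"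
    using z(1)
  proof (induction rule: cspan_induct_good)
    case zero then show ?case by (simp add: good_0)
  next
    case (base s)
    then obtain a' \<chi>' b' where s: "s = a' * \<chi>' * b'" "a' \<in> FA (n-1)" "b' \<in> FA (n-1)" "\<chi>' \<in> X (n-1)"
      by (auto simp: Bs_def)
    obtain b'' where b'': "b'' \<in> FA n" "b' * \<chi> - \<chi> * b'' \<in> HCideal q (n+1)" using F4[OF n s(3) c] by blast
    have sub: "FA (n-1) \<subseteq> FA (n+1)" by (rule FA_mono) simp
    have sub': "FA (n-1) \<subseteq> FA n" by (rule FA_mono) simp
    have c'F: "\<chi>' \<in> FA (n+1)" using X_FA[OF s(4)] nn FA_Suc by simp
    have f2: "tt n * a' - a' * tt n \<in> HCideal q (n+1)" using F2[OF n s(2)] .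
    have e: "tt n * (s * \<chi> * b) - a' * (tt n * \<chi>' * \<chi>) * (b'' * b)
       = (tt n * a' - a' * tt n) * (\<chi>' * b' * \<chi> * b) + (a' * tt n * \<chi>') * (b' * \<chi> - \<chi> * b'') * b"
      unfolding s by (simp add: algebra_simps)
    have "tt n * (s * \<chi> * b) - a' * (tt n * \<chi>' * \<chi>) * (b'' * b) \<in> HCideal q (n+1)"
      unfolding e using f2 b''(2) s sub c'F cF bF n
      by (intro I_add I_right[OF f2] I_mult[OF b''(2)]) auto
    moreover have "good q n (a' * (tt n * \<chi>' * \<chi>) * (b'' * b))"
      using s(2) b''(1) b sub' by (intro good_ctx[OF core[OF n s(4) c]]) auto
    ultimately show ?case using good_I by blast
  next
    case (add x y) then show ?case by (simp add: algebra_simps good_add)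
  next
    case (smult x c) then show ?case by (simp add: mult.assoc sc_pull good_sc)
  qed
  then show ?thesis using d good_I by blast
qed

lemma Kkey:
  assumes IH: "1 \<le> n \<Longrightarrow> \<forall>x\<in>FA n. good q (n-1) x"
    and g: "g \<in> gens (n+1)" and a: "a \<in> FA n" and b: "b \<in> FA n" and c: "\<chi> \<in> X n"
  shows "good q n (gen g * (a * \<chi> * b))"
proof (cases "g \<in> gens n")
  case True
  then have "gen g * a \<in> FA n" using a gen_FA by simp
  then have "good q n ((gen g * a) * \<chi> * b)" using b c by (intro good_base)
  then show ?thesis by (simp add: mult.assoc)
next
  case False
  then have "g = V (n+1) \<or> (g = T n \<and> 1 \<le> n)" using g by (auto simp: gens_def)
  then show ?thesis
  proof
    assume gV: "g = V (n+1)"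
    have "(vv (n+1) * a - alpha a * vv (n+1)) * (\<chi> * b) \<in> HCideal q (n+1)"
      using F1[OF a] X_FA[OF c] b FA_Suc by (intro I_right) auto
    then have "gen g * (a * \<chi> * b) - alpha a * (vv (n+1) * \<chi>) * b \<in> HCideal q (n+1)"
      using gV by (simp add: algebra_simps)
    moreover have "good q n (alpha a * (vv (n+1) * \<chi>) * b)" using vchi[OF c] a b by (intro good_ctx) auto
    ultimately show ?thesis using good_I by blast
  next
    assume "g = T n \<and> 1 \<le> n"
    then show ?thesis using Tcase[of n q a b \<chi>] IH a b c by auto
  qed
qed

lemma step:
  assumes IH: "1 \<le> n \<Longrightarrow> \<forall>x\<in>FA n. good q (n-1) x"
  shows "\<forall>x\<in>FA (n+1). good q n x"
proof
  fix x assume "x \<in> FA (n+1)"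
  then show "good q n x"
  proof (induction rule: FA_induct)
    case zero then show ?case by (rule good_0)
  next
    case (add a b) then show ?case by (rule good_add)
  next
    case (sc c)
    have "good q n (1 * 1 * 1)" by (rule good_base) (auto simp: X_def)
    then show ?case using good_sc[of q n "1*1*1" c] by simp
  next
    case (gen g y)
    then obtain z where z: "z \<in> cspan (Bs n)" "y - z \<in> HCideal q (n+1)" unfolding good_def by blast
    have gF: "gen g \<in> FA (n+1)" using gen_FA[OF gen(1)] .
    have "gen g * (y - z) \<in> HCideal q (n+1)" using z(2) gF by (rule I_left)
    then have d: "gen g * y - gen g * z \<in> HCideal q (n+1)" by (simp add: algebra_simps)
    have "good q n (gen g * z)" using z(1)
    proof (induction rule: cspan_induct_good)
      case zero then show ?case by (simp add: good_0)
    next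
      case (base s)
      then obtain a \<chi> b where "s = a * \<chi> * b" "a \<in> FA n" "b \<in> FA n" "\<chi> \<in> X n" by (auto simp: Bs_def)
      then show ?case using Kkey[OF IH gen(1)] by simp
    next
      case (add x y) then show ?case by (simp add: algebra_simps good_add)
    next
      case (smult x c) then show ?case by (simp add: sc_pull good_sc)
    qed
    then show ?case using d good_I by blast
  qed
qed

lemma main: "\<forall>x\<in>FA (n+1). good q n x"
proof (induction n)
  case 0 then show ?case by (intro step) simp
next
  case (Suc n) then show ?case by (intro step) simp
qed



definition B2 :: "complex \<Rightarrow> nat \<Rightarrow> fa set" where
  "B2 q n = {a * \<chi> * b | a \<chi> b. a \<in> Even q n \<and> b \<in> Even q n \<and>
                 \<chi> \<in> {1, tt n, vv n * vv (n+1), vv n * vv (n+1) * tt n}}"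

definition good2 :: "complex \<Rightarrow> nat \<Rightarrow> fa \<Rightarrow> bool" where
  "good2 q n x = (\<exists>y \<in> cspan (B2 q n). x - y \<in> HCideal q (n+1))"

lemma good2_0: "good2 q n 0" unfolding good2_def by (rule bexI[of _ 0]) (auto intro: cspan.zero)
lemma good2_add: "good2 q n x \<Longrightarrow> good2 q n y \<Longrightarrow> good2 q n (x + y)"
  unfolding good2_def
proof (elim bexE)
  fix a b assume h: "a \<in> cspan (B2 q n)" "x - a \<in> HCideal q (n + 1)" "b \<in> cspan (B2 q n)" "y - b \<in> HCideal q (n + 1)"
  have e: "x + y - (a + b) = (x - a) + (y - b)" by (simp add: algebra_simps)
  have "x + y - (a + b) \<in> HCideal q (n + 1)" unfolding e using h by (intro I_add)
  then show "\<exists>y'\<in>cspan (B2 q n). x + y - y' \<in> HCideal q (n + 1)"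
    using h by (intro bexI[of _ "a + b"]) (simp_all add: cspan.add)
qed
lemma good2_sc: "good2 q n x \<Longrightarrow> good2 q n (sc c * x)"
  unfolding good2_def
proof (elim bexE)
  fix a assume "a \<in> cspan (B2 q n)" "x - a \<in> HCideal q (n + 1)"
  then show "\<exists>y'\<in>cspan (B2 q n). sc c * x - y' \<in> HCideal q (n + 1)"
    by (intro bexI[of _ "sc c * a"]) (auto intro: cspan.smult simp: right_diff_distrib[symmetric] I_sc)
qed
lemma good2_neg: "good2 q n x \<Longrightarrow> good2 q n (- x)"
  using good2_sc[of q n x "-1"] by (simp add: sc_minus)
lemma good2_by: "x - y = z \<Longrightarrow> z \<in> HCideal q (n+1) \<Longrightarrow> good2 q n y \<Longrightarrow> good2 q n x"
  unfolding good2_def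
proof (elim bexE)
  fix a assume "x - y = z" "z \<in> HCideal q (n+1)" "a \<in> cspan (B2 q n)" "y - a \<in> HCideal q (n + 1)"
  then have "z + (y - a) \<in> HCideal q (n+1)" by simp
  moreover have "z + (y - a) = x - a" using \<open>x - y = z\<close> by (simp add: algebra_simps)
  ultimately show "\<exists>y'\<in>cspan (B2 q n). x - y' \<in> HCideal q (n + 1)" using \<open>a \<in> cspan (B2 q n)\<close> by auto
qed

lemma Even_I: "p \<in> FA n \<Longrightarrow> alpha p = p \<Longrightarrow> p \<in> Even q n"
  by (simp add: Even_def)

lemma good2_base: "a \<in> FA n \<Longrightarrow> alpha a = a \<Longrightarrow> b \<in> FA n \<Longrightarrow> alpha b = b \<Longrightarrow>
   \<chi> \<in> {1, tt n, vv n * vv (n+1), vv n * vv (n+1) * tt n} \<Longrightarrow> good2 q n (a * \<chi> * b)"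
proof -
  assume h: "a \<in> FA n" "alpha a = a" "b \<in> FA n" "alpha b = b"
     "\<chi> \<in> {1, tt n, vv n * vv (n+1), vv n * vv (n+1) * tt n}"
  then have "a \<in> Even q n" "b \<in> Even q n" by (auto intro: Even_I)
  then have "a * \<chi> * b \<in> B2 q n" unfolding B2_def using h(5) by blast
  then show ?thesis unfolding good2_def by (intro bexI[of _ "a * \<chi> * b"]) (auto intro: cspan.base)
qed

definition E :: "fa \<Rightarrow> fa" where "E y = sc (1/2) * (y + alpha y)"

lemma half_twice: "sc (1/2) * x + sc (1/2) * x = x"
proof -
  have "sc (1/2) * x + sc (1/2) * x = (sc (1/2) + sc (1/2)) * x" by (simp add: algebra_simps)
  also have "\<dots> = x" by (simp only: sc_add[symmetric]) simp
  finally show ?thesis .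
qed

lemma E_add: "E (x + y) = E x + E y" by (simp add: E_def algebra_simps)
lemma E_even: "alpha t = t \<Longrightarrow> E t = t" by (simp add: E_def distrib_left half_twice)
lemma E_odd: "alpha t = - t \<Longrightarrow> E t = 0" by (simp add: E_def)
lemma E_0: "E 0 = 0" by (simp add: E_def)
lemma sc_comm2: "sc c * (sc d * x) = sc d * (sc c * x)"
  by (simp add: mult.assoc[symmetric] sc_mult mult.commute)
lemma E_sc: "E (sc c * x) = sc c * E x"
  by (simp add: E_def distrib_left sc_comm2)

context fixes q :: complex and n :: nat assumes n1: "1 \<le> n" begin

lemma ivv: "vv n * vv n - 1 \<in> HCideal q (n+1)" using n1 by (intro rvv_sq) auto
lemma iww2: "vv (n+1) * vv (n+1) - 1 \<in> HCideal q (n+1)" by (intro rvv_sq) auto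
lemma iTv2: "tt n * vv n - vv (n+1) * tt n \<in> HCideal q (n+1)" using rTv[of n "n+1" q] n1 by simp
lemma ivw2: "vv (n+1) * vv n + vv n * vv (n+1) \<in> HCideal q (n+1)" using rvv_anti[of "n+1" "n+1" n q] n1 by simp

lemma par:
  assumes p: "p \<in> FA n" "alpha p = s1 * p" and r: "r \<in> FA n" "alpha r = s2 * r"
    and s: "s1 = 1 \<or> s1 = -1" "s2 = 1 \<or> s2 = -1"
    and c: "\<chi> \<in> X n"
  shows "good2 q n (E (p * \<chi> * r))"
proof -
  have Xn: "\<chi> = 1 \<or> \<chi> = tt n \<or> \<chi> = vv (n+1) \<or> \<chi> = vv (n+1) * tt n" using c n1 by (auto simp: X_def)
  have vF: "vv n \<in> FA n" using n1 by simp
  have pF: "p \<in> FA (n+1)" and rF: "r \<in> FA (n+1)" using p r FA_Suc by auto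
  have fw: "vv (n+1) \<in> FA (n+1)" and fv: "vv n \<in> FA (n+1)" and fT: "tt n \<in> FA (n+1)" using n1 by auto
  note I = I_add I_diff I_neg I_left I_right
  from s Xn show ?thesis
  proof (elim disjE)
    assume h: "s1 = 1" "s2 = 1" "\<chi> = 1"
    have "good2 q n (p * 1 * r)" using p r h by (intro good2_base) auto
    then show ?thesis using p r h by (simp add: E_even)
  next
    assume "s1 = 1" "s2 = 1" "\<chi> = tt n"
    then show ?thesis using p r by (simp add: E_even good2_base)
  next
    assume "s1 = 1" "s2 = 1" "\<chi> = vv (n+1)"
    then show ?thesis using p r by (simp add: E_odd good2_0)
  next
    assume "s1 = 1" "s2 = 1" "\<chi> = vv (n+1) * tt n"
    then show ?thesis using p r by (simp add: E_odd good2_0)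
  next
    assume "s1 = 1" "s2 = -1" "\<chi> = 1"
    then show ?thesis using p r by (simp add: E_odd good2_0)
  next
    assume "s1 = 1" "s2 = -1" "\<chi> = tt n"
    then show ?thesis using p r by (simp add: E_odd good2_0)
  next
    assume h: "s1 = 1" "s2 = -1" "\<chi> = vv (n+1)"
    then have "E (p * \<chi> * r) = p * vv (n+1) * r" using p r by (simp add: E_even)
    moreover have "good2 q n (p * vv (n+1) * r)"
    proof (rule good2_by[where y = "- (p * (vv n * vv (n+1)) * (vv n * r))"
          and z = "p * (- ((vv n * vv n - 1) * vv (n+1)) + vv n * (vv (n+1) * vv n + vv n * vv (n+1))) * r"])
      show "p * vv (n+1) * r - - (p * (vv n * vv (n+1)) * (vv n * r)) =
        p * (- ((vv n * vv n - 1) * vv (n+1)) + vv n * (vv (n+1) * vv n + vv n * vv (n+1))) * r"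
        by (simp add: algebra_simps)
      show "p * (- ((vv n * vv n - 1) * vv (n+1)) + vv n * (vv (n+1) * vv n + vv n * vv (n+1))) * r \<in> HCideal q (n+1)"
        using ivv ivw2 fw fv pF rF by (intro I_mult I_add I_neg I_right[OF ivv] I_left[OF ivw2]) auto
      show "good2 q n (- (p * (vv n * vv (n+1)) * (vv n * r)))"
        using p r h vF by (intro good2_neg good2_base) auto
    qed
    ultimately show ?thesis by simp
  next
    assume h: "s1 = 1" "s2 = -1" "\<chi> = vv (n+1) * tt n"
    then have "E (p * \<chi> * r) = p * (vv (n+1) * tt n) * r" using p r by (simp add: E_even)
    moreover have "good2 q n (p * (vv (n+1) * tt n) * r)"
    proof (rule good2_by[where y = "p * tt n * (vv n * r)"
          and z = "p * (- (tt n * vv n - vv (n+1) * tt n)) * r"])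
      show "p * (vv (n+1) * tt n) * r - p * tt n * (vv n * r) = p * (- (tt n * vv n - vv (n+1) * tt n)) * r"
        by (simp add: algebra_simps)
      show "p * (- (tt n * vv n - vv (n+1) * tt n)) * r \<in> HCideal q (n+1)"
        using iTv2 pF rF by (intro I_mult I_neg) auto
      show "good2 q n (p * tt n * (vv n * r))"
        using p r h vF by (intro good2_base) auto
    qed
    ultimately show ?thesis by simp
  next
    assume "s1 = -1" "s2 = 1" "\<chi> = 1"
    then show ?thesis using p r by (simp add: E_odd good2_0)
  next
    assume "s1 = -1" "s2 = 1" "\<chi> = tt n"
    then show ?thesis using p r by (simp add: E_odd good2_0)
  next
    assume h: "s1 = -1" "s2 = 1" "\<chi> = vv (n+1)"
    then have "E (p * \<chi> * r) = p * vv (n+1) * r" using p r by (simp add: E_even)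
    moreover have "good2 q n (p * vv (n+1) * r)"
    proof (rule good2_by[where y = "(p * vv n) * (vv n * vv (n+1)) * r"
          and z = "p * (- ((vv n * vv n - 1) * vv (n+1))) * r"])
      show "p * vv (n+1) * r - (p * vv n) * (vv n * vv (n+1)) * r = p * (- ((vv n * vv n - 1) * vv (n+1))) * r"
        by (simp add: algebra_simps)
      show "p * (- ((vv n * vv n - 1) * vv (n+1))) * r \<in> HCideal q (n+1)"
        using ivv fw pF rF by (intro I_mult I_neg I_right[OF ivv]) auto
      show "good2 q n ((p * vv n) * (vv n * vv (n+1)) * r)"
        using p r h vF by (intro good2_base) auto
    qed
    ultimately show ?thesis by simp
  next
    assume h: "s1 = -1" "s2 = 1" "\<chi> = vv (n+1) * tt n"
    then have "E (p * \<chi> * r) = p * (vv (n+1) * tt n) * r" using p r by (simp add: E_even)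
    moreover have "good2 q n (p * (vv (n+1) * tt n) * r)"
    proof (rule good2_by[where y = "(p * vv n) * (vv n * vv (n+1) * tt n) * r"
          and z = "p * (- ((vv n * vv n - 1) * (vv (n+1) * tt n))) * r"])
      show "p * (vv (n+1) * tt n) * r - (p * vv n) * (vv n * vv (n+1) * tt n) * r = p * (- ((vv n * vv n - 1) * (vv (n+1) * tt n))) * r"
        by (simp add: algebra_simps)
      show "p * (- ((vv n * vv n - 1) * (vv (n+1) * tt n))) * r \<in> HCideal q (n+1)"
        using ivv fw fT pF rF by (intro I_mult I_neg I_right[OF ivv]) auto
      show "good2 q n ((p * vv n) * (vv n * vv (n+1) * tt n) * r)"
        using p r h vF by (intro good2_base) auto
    qed
    ultimately show ?thesis by simp
  next
    assume h: "s1 = -1" "s2 = -1" "\<chi> = 1"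
    then have "E (p * \<chi> * r) = (p * r) * 1 * 1" using p r by (simp add: E_even)
    moreover have "good2 q n ((p * r) * 1 * 1)" using p r h by (intro good2_base) auto
    ultimately show ?thesis by simp
  next
    assume h: "s1 = -1" "s2 = -1" "\<chi> = tt n"
    then have "E (p * \<chi> * r) = p * tt n * r" using p r by (simp add: E_even)
    moreover have "good2 q n (p * tt n * r)"
    proof (rule good2_by[where y = "(p * vv n) * (vv n * vv (n+1) * tt n) * (vv n * r)"
          and z = "p * (- ((vv n * vv n - 1) * (vv (n+1) * tt n * vv n)) - (vv (n+1) * vv (n+1) - 1) * tt n - vv (n+1) * (tt n * vv n - vv (n+1) * tt n)) * r"])
      show "p * tt n * r - (p * vv n) * (vv n * vv (n+1) * tt n) * (vv n * r) = p * (- ((vv n * vv n - 1) * (vv (n+1) * tt n * vv n)) - (vv (n+1) * vv (n+1) - 1) * tt n - vv (n+1) * (tt n * vv n - vv (n+1) * tt n)) * r"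
        by (simp add: algebra_simps)
      show "p * (- ((vv n * vv n - 1) * (vv (n+1) * tt n * vv n)) - (vv (n+1) * vv (n+1) - 1) * tt n - vv (n+1) * (tt n * vv n - vv (n+1) * tt n)) * r \<in> HCideal q (n+1)"
        using ivv iww2 iTv2 fw fT fv pF rF
        by (intro I_mult I_diff I_neg I_right[OF ivv] I_right[OF iww2] I_left[OF iTv2]) auto
      show "good2 q n ((p * vv n) * (vv n * vv (n+1) * tt n) * (vv n * r))"
        using p r h vF by (intro good2_base) auto
    qed
    ultimately show ?thesis by simp
  next
    assume "s1 = -1" "s2 = -1" "\<chi> = vv (n+1)"
    then show ?thesis using p r by (simp add: E_odd good2_0)
  next
    assume "s1 = -1" "s2 = -1" "\<chi> = vv (n+1) * tt n"
    then show ?thesis using p r by (simp add: E_odd good2_0)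
  qed
qed

end



definition Od :: "fa \<Rightarrow> fa" where "Od y = sc (1/2) * (y - alpha y)"

lemma E_Od: "E a + Od a = a"
proof -
  have "E a + Od a = sc (1/2) * a + sc (1/2) * a" by (simp add: E_def Od_def algebra_simps)
  then show ?thesis by (simp add: half_twice)
qed
lemma alpha_E: "alpha (E a) = E a" by (simp add: E_def add.commute)
lemma alpha_Od: "alpha (Od a) = - Od a" by (simp add: Od_def algebra_simps)
lemma E_FA: "a \<in> FA n \<Longrightarrow> E a \<in> FA n" by (simp add: E_def)
lemma Od_FA: "a \<in> FA n \<Longrightarrow> Od a \<in> FA n" by (simp add: Od_def)

lemma goodE: "1 \<le> n \<Longrightarrow> y \<in> cspan (Bs n) \<Longrightarrow> good2 q n (E y)"
proof -
  assume n: "1 \<le> n" and y: "y \<in> cspan (Bs n)"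
  from y show ?thesis
  proof (induction rule: cspan_induct_good)
    case zero then show ?case by (simp add: E_0 good2_0)
  next
    case (base s)
    then obtain a \<chi> b where s: "s = a * \<chi> * b" "a \<in> FA n" "b \<in> FA n" "\<chi> \<in> X n" by (auto simp: Bs_def)
    have e: "s = E a * \<chi> * E b + E a * \<chi> * Od b + Od a * \<chi> * E b + Od a * \<chi> * Od b"
    proof -
      have "s = (E a + Od a) * \<chi> * (E b + Od b)" using s(1) by (simp add: E_Od)
      then show ?thesis by (simp add: algebra_simps)
    qed
    have p1: "alpha (E a) = 1 * E a" "alpha (Od a) = (-1) * Od a"
      "alpha (E b) = 1 * E b" "alpha (Od b) = (-1) * Od b" by (simp_all add: alpha_E alpha_Od)
    have g: "good2 q n (E (E a * \<chi> * E b))" "good2 q n (E (E a * \<chi> * Od b))"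
        "good2 q n (E (Od a * \<chi> * E b))" "good2 q n (E (Od a * \<chi> * Od b))"
      using par[OF n E_FA[OF s(2)] p1(1) E_FA[OF s(3)] p1(3) _ _ s(4)]
        par[OF n E_FA[OF s(2)] p1(1) Od_FA[OF s(3)] p1(4) _ _ s(4)]
        par[OF n Od_FA[OF s(2)] p1(2) E_FA[OF s(3)] p1(3) _ _ s(4)]
        par[OF n Od_FA[OF s(2)] p1(2) Od_FA[OF s(3)] p1(4) _ _ s(4)] by auto
    show ?case unfolding e E_add using g by (intro good2_add)
  next
    case (add x y) then show ?case by (simp add: E_add good2_add)
  next
    case (smult x c) then show ?case by (simp add: E_sc good2_sc)
  qed
qed

theorem proposition2p15:
  fixes q :: complex and n :: nat
  assumes "q \<noteq> 0" and "1 \<le> n"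
  shows "(\<forall>x \<in> FA (n+1). \<exists>y \<in> cspan {a * \<chi> * b | a \<chi> b. a \<in> FA n \<and> b \<in> FA n \<and>
                 \<chi> \<in> {1, tt n, vv (n+1), vv (n+1) * tt n}}.
            x - y \<in> HCideal q (n+1))
       \<and> (\<forall>x \<in> Even q (n+1). \<exists>y \<in> cspan {a * \<chi> * b | a \<chi> b. a \<in> Even q n \<and> b \<in> Even q n \<and>
                 \<chi> \<in> {1, tt n, vv n * vv (n+1), vv n * vv (n+1) * tt n}}.
            x - y \<in> HCideal q (n+1))"
proof
  have BsE: "Bs n = {a * \<chi> * b | a \<chi> b. a \<in> FA n \<and> b \<in> FA n \<and> \<chi> \<in> {1, tt n, vv (n+1), vv (n+1) * tt n}}"
    using assms(2) by (simp add: Bs_def X_def)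
  show "\<forall>x \<in> FA (n+1). \<exists>y \<in> cspan {a * \<chi> * b | a \<chi> b. a \<in> FA n \<and> b \<in> FA n \<and>
                 \<chi> \<in> {1, tt n, vv (n+1), vv (n+1) * tt n}}. x - y \<in> HCideal q (n+1)"
    using main[of n q] unfolding good_def BsE by blast
  show "\<forall>x \<in> Even q (n+1). \<exists>y \<in> cspan {a * \<chi> * b | a \<chi> b. a \<in> Even q n \<and> b \<in> Even q n \<and>
                 \<chi> \<in> {1, tt n, vv n * vv (n+1), vv n * vv (n+1) * tt n}}. x - y \<in> HCideal q (n+1)"
  proof
    fix x assume x: "x \<in> Even q (n+1)"
    then have xF: "x \<in> FA (n+1)" and xa: "alpha x - x \<in> HCideal q (n+1)" by (auto simp: Even_def)
    obtain y where y: "y \<in> cspan (Bs n)" "x - y \<in> HCideal q (n+1)" using main[of n q] xF unfolding good_def by blast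
    obtain z where z: "z \<in> cspan (B2 q n)" "E y - z \<in> HCideal q (n+1)"
      using goodE[OF assms(2) y(1), of q] unfolding good2_def by blast
    have e1: "x - E x = sc (1/2) * (- (alpha x - x))"
    proof -
      have "x - E x = (sc (1/2) * x + sc (1/2) * x) - E x" by (simp add: half_twice)
      then show ?thesis by (simp add: E_def algebra_simps)
    qed
    have i1: "x - E x \<in> HCideal q (n+1)" unfolding e1 using xa by (intro I_sc I_neg)
    have e2: "E x - E y = sc (1/2) * ((x - y) + alpha (x - y))" by (simp add: E_def algebra_simps)
    have i2: "E x - E y \<in> HCideal q (n+1)" unfolding e2 using y(2) alpha_I[OF y(2)] by (intro I_sc I_add)
    have ez: "x - z = (x - E x) + (E x - E y) + (E y - z)" by (simp add: algebra_simps)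
    have "x - z \<in> HCideal q (n+1)" unfolding ez using i1 i2 z(2) by (intro I_add)
    then show "\<exists>y \<in> cspan {a * \<chi> * b | a \<chi> b. a \<in> Even q n \<and> b \<in> Even q n \<and>
                 \<chi> \<in> {1, tt n, vv n * vv (n+1), vv n * vv (n+1) * tt n}}. x - y \<in> HCideal q (n+1)"
      using z(1) unfolding B2_def by blast
  qed
qed


end
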